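(* Let $n\ge1$, distinct real $a_1,\dots,a_n$, $F(a)=\sum_{k=0}^nA_ka^k=\prod_{i=1}^n(a-a_i)$, signs $\epsilon_i$, reals $\xi_i,\nu_n$, $\Delta_i=\epsilon_i(a-a_i)$, $x=\frac{\nu_n}2a+\sum_i\xi_i\Delta_i^{-1/2}$ on an interval of $a>0$ where all $\Delta_i>0$ and $\dot x\ne0$. Let $H=\Pi^2+aP_y^2$, $\Pi=\frac a{\dot x}P_a$, $$G=\sum_{k=0}^nA_{n-k}H^{n-k}P_y^{2k+1},\ Q_1=\sum_{k=0}^n\tilde b_kH^{n-k}\Pi P_y^{2k},\ Q_2=\sum_{k=0}^n\tilde c_kH^{n-k}P_y^{2k+1},\ S_1=Q_1+yG,\ S_2=Q_2+yQ_1+\tfrac{y^2}2G,$$ with $\tilde b_k=(-1)^k\big(\nu_n\sigma_k+\sum_i\frac{\xi_i}{\sqrt{\Delta_i}}\sigma^i_{k-1}\big)$ and $\tilde c_k=\frac{(-1)^{k+1}}2\big\{\nu_n^2a\sigma_k+2\nu_n\sum_i\frac{\xi_i}{\sqrt{\Delta_i}}(\sigma^i_k+a\sigma^i_{k-1})+\sum_i\frac{\xi_i^2}{\Delta_i}\sigma^i_{k-1}+\sum_{i\ne j}\frac{\xi_i\xi_j}{\sqrt{\Delta_i\Delta_j}}(\sigma^{ij}_{k-1}+a\sigma^{ij}_{k-2})\big\}$. Then $$S_1^2-2G\,S_2=\sum_{k,l=1}^n\mathcal{Q}_{kl}\,H^{2n-k-l}P_y^{2(k+l+1)}+\nu_n^2\sum_{k,l=0}^n(-1)^{k+l}\sigma_k\sigma_l\,H^{2n+1-k-l}P_y^{2(k+l)},$$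 where $\mathcal{Q}_{kl}=(-1)^{k+l+1}\sum_{i=1}^n\epsilon_i\xi_i^2\sigma^i_{k-1}\sigma^i_{l-1}$.
   Context: Symmetric functions: $\sigma_k$ by $\prod_i(a-a_i)=\sum_{k=0}^n(-1)^k\sigma_ka^{n-k}$; $\sigma^i_m$ ($-1\le m\le n$) by $\prod_{l\ne i}(a-a_l)=\sum_{m=0}^{n-1}(-1)^m\sigma^i_ma^{n-1-m}$ with $\sigma^i_{-1}=\sigma^i_n=0$; $\sigma^{ij}_m$ ($i\ne j$, $-2\le m\le n$) by $\prod_{l\ne i,j}(a-a_l)=\sum_{m=0}^{n-2}(-1)^m\sigma^{ij}_ma^{n-2-m}$ with $\sigma^{ij}_{-2}=\sigma^{ij}_{-1}=\sigma^{ij}_{n-1}=\sigma^{ij}_n=0$. *)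

theory Defs
  imports "HOL-Analysis.Analysis" "HOL-Computational_Algebra.Polynomial"
begin

definition root_poly :: "nat set \<Rightarrow> (nat \<Rightarrow> real) \<Rightarrow> real poly" where
  "root_poly I as = (\<Prod>i\<in>I. [:- as i, 1:])"

text \<open>Elementary symmetric functions, defined as in the paper by
  prod over I of (X - a_l) = sum_{m=0}^{|I|} (-1)^m sig_m X^(|I|-m),
  with integer index m and sig_m = 0 for m < 0 or m > |I|.
  sigma_k = sig {1..n}, sigma^i_m = sig ({1..n}-{i}), sigma^{ij}_m = sig ({1..n}-{i,j}).\<close>
definition sig :: "nat set \<Rightarrow> (nat \<Rightarrow> real) \<Rightarrow> int \<Rightarrow> real" where
  "sig I as m = (if 0 \<le> m \<and> m \<le> int (card I)
      then (-1) ^ nat m * coeff (root_poly I as) (card I - nat m) else 0)"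

end

theory Submission
  imports Defs
begin


lemma rp_degree: "degree (root_poly I as) = card I"
  unfolding root_poly_def
  by (subst degree_prod_eq_sum_degree) auto

lemma rp_lead: "coeff (root_poly I as) (card I) = 1"
  using lead_coeff_prod[of "\<lambda>i. [:- as i, 1:]" I] rp_degree[of I as]
  unfolding root_poly_def by simp

lemma rp_hom:
  assumes "finite I"
  shows "(\<Sum>j\<le>card I. coeff (root_poly I as) j * u ^ j * v ^ (card I - j)) = (\<Prod>i\<in>I. u - as i * v)"
proof (cases "v = 0")
  case True
  have "(\<Sum>j\<le>card I. coeff (root_poly I as) j * u ^ j * v ^ (card I - j))
      = (\<Sum>j\<in>{card I}. coeff (root_poly I as) j * u ^ j * v ^ (card I - j))"
    by (rule sum.mono_neutral_right) (auto simp: True)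
  also have "\<dots> = u ^ card I" using rp_lead[of I as] by simp
  finally show ?thesis using True by simp
next
  case False
  have "(\<Sum>j\<le>card I. coeff (root_poly I as) j * u ^ j * v ^ (card I - j))
      = v ^ card I * (\<Sum>j\<le>card I. coeff (root_poly I as) j * (u/v) ^ j)"
    unfolding sum_distrib_left
    by (rule sum.cong) (auto simp: False power_divide power_diff)
  also have "\<dots> = v ^ card I * poly (root_poly I as) (u/v)"
    by (simp add: poly_altdef rp_degree)
  also have "\<dots> = (\<Prod>i\<in>I. v) * (\<Prod>i\<in>I. u/v - as i)"
    by (simp add: root_poly_def poly_prod)
  also have "\<dots> = (\<Prod>i\<in>I. u - as i * v)"
    by (subst prod.distrib[symmetric]) (rule prod.cong, auto simp: False field_simps)
  finally show ?thesis .
qed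



lemma sig_sum0:
  assumes "finite I"
  shows "(\<Sum>k=0..card I. (-1)^k * sig I as (int k) * u^(card I - k) * v^k) = (\<Prod>i\<in>I. u - as i * v)"
proof -
  have "(\<Sum>k=0..card I. (-1)^k * sig I as (int k) * u^(card I - k) * v^k)
      = (\<Sum>k=0..card I. coeff (root_poly I as) (card I - k) * u^(card I - k) * v^(card I - (card I - k)))"
    by (rule sum.cong) (auto simp: sig_def power_mult_distrib[symmetric])
  also have "\<dots> = (\<Sum>j=0..card I. coeff (root_poly I as) j * u^j * v^(card I - j))"
    by (subst sum.atLeastAtMost_rev) simp
  also have "\<dots> = (\<Prod>i\<in>I. u - as i * v)"
    using rp_hom[OF assms, of as u v] by (simp add: atLeast0AtMost)
  finally show ?thesis .
qed

lemma sig_sum: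
  assumes "finite I" "card I + d \<le> N"
  shows "(\<Sum>k=0..N. (-1)^k * sig I as (int k - int d) * u^(N-k) * v^k)
     = (-1)^d * u^(N - card I - d) * v^d * (\<Prod>i\<in>I. u - as i * v)"
proof -
  let ?f = "\<lambda>k. (-1)^k * sig I as (int k - int d) * u^(N-k) * v^k"
  have "sum ?f {0..N} = sum ?f {0 + d..card I + d}"
    by (rule sum.mono_neutral_right) (use assms in \<open>auto simp: sig_def\<close>)
  also have "\<dots> = (\<Sum>j=0..card I. ?f (j + d))"
    by (rule sum.shift_bounds_cl_nat_ivl)
  also have "\<dots> = (\<Sum>j=0..card I. (-1)^d * u^(N - card I - d) * v^d * ((-1)^j * sig I as (int j) * u^(card I - j) * v^j))"
  proof (rule sum.cong)
    fix j assume "j \<in> {0..card I}"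
    then have "N - (j + d) = (N - card I - d) + (card I - j)" using assms by auto
    then show "?f (j + d) = (-1)^d * u^(N - card I - d) * v^d * ((-1)^j * sig I as (int j) * u^(card I - j) * v^j)"
      by (simp add: power_add)
  qed simp
  also have "\<dots> = (-1)^d * u^(N - card I - d) * v^d * (\<Prod>i\<in>I. u - as i * v)"
    by (simp add: sum_distrib_left[symmetric] sig_sum0[OF assms(1)])
  finally show ?thesis .
qed


lemma sig_sum_d0:
  assumes "finite I" "card I \<le> N"
  shows "(\<Sum>k=0..N. (-1)^k * sig I as (int k) * u^(N-k) * v^k) = u^(N - card I) * (\<Prod>i\<in>I. u - as i * v)"
  using sig_sum[OF assms(1), of 0 N as u v] assms by simp

lemma sig_sum_d1:
  assumes "finite I" "card I + 1 \<le> N"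
  shows "(\<Sum>k=0..N. (-1)^k * sig I as (int k - 1) * u^(N-k) * v^k) = - (u^(N - card I - 1) * v * (\<Prod>i\<in>I. u - as i * v))"
  using sig_sum[OF assms(1), of 1 N as u v] assms by simp

lemma sig_sum_d2:
  assumes "finite I" "card I + 2 \<le> N"
  shows "(\<Sum>k=0..N. (-1)^k * sig I as (int k - 2) * u^(N-k) * v^k) = u^(N - card I - 2) * v^2 * (\<Prod>i\<in>I. u - as i * v)"
  using sig_sum[OF assms(1), of 2 N as u v] assms by simp


theorem proposition26:
  fixes n :: nat and as eps xi :: "nat \<Rightarrow> real" and nu a y Pa Py :: real
  assumes n_pos: "n \<ge> 1"
    and distinct: "inj_on as {1..n}"
    and signs: "\<forall>i\<in>{1..n}. eps i = 1 \<or> eps i = -1"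
    and a_pos: "a > 0"
    and Delta_pos: "\<forall>i\<in>{1..n}. eps i * (a - as i) > 0"
    and xdot_nz: "deriv (\<lambda>t. nu / 2 * t + (\<Sum>i=1..n. xi i / sqrt (eps i * (t - as i)))) a \<noteq> 0"
  shows
   "let x = (\<lambda>t. nu / 2 * t + (\<Sum>i=1..n. xi i / sqrt (eps i * (t - as i))));
        Delta = (\<lambda>i. eps i * (a - as i));
        A = (\<lambda>k. coeff (root_poly {1..n} as) k);
        \<sigma> = (\<lambda>m. sig {1..n} as m);
        \<sigma>1 = (\<lambda>i m. sig ({1..n} - {i}) as m);
        \<sigma>2 = (\<lambda>i j m. sig ({1..n} - {i, j}) as m);
        Pmom = a / deriv x a * Pa;
        H = Pmom ^ 2 + a * Py ^ 2;
        bt = (\<lambda>k::nat. (-1) ^ k * (nu * \<sigma> (int k)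
                + (\<Sum>i=1..n. xi i / sqrt (Delta i) * \<sigma>1 i (int k - 1))));
        ct = (\<lambda>k::nat. (-1) ^ (k + 1) / 2 * (nu ^ 2 * a * \<sigma> (int k)
                + 2 * nu * (\<Sum>i=1..n. xi i / sqrt (Delta i) * (\<sigma>1 i (int k) + a * \<sigma>1 i (int k - 1)))
                + (\<Sum>i=1..n. xi i ^ 2 / Delta i * \<sigma>1 i (int k - 1))
                + (\<Sum>i=1..n. \<Sum>j\<in>{1..n} - {i}. xi i * xi j / sqrt (Delta i * Delta j)
                      * (\<sigma>2 i j (int k - 1) + a * \<sigma>2 i j (int k - 2)))));
        G = (\<Sum>k=0..n. A (n - k) * H ^ (n - k) * Py ^ (2 * k + 1));
        Q1 = (\<Sum>k=0..n. bt k * H ^ (n - k) * Pmom * Py ^ (2 * k));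
        Q2 = (\<Sum>k=0..n. ct k * H ^ (n - k) * Py ^ (2 * k + 1));
        S1 = Q1 + y * G;
        S2 = Q2 + y * Q1 + y ^ 2 / 2 * G;
        Qc = (\<lambda>k l::nat. (-1) ^ (k + l + 1)
                * (\<Sum>i=1..n. eps i * xi i ^ 2 * \<sigma>1 i (int k - 1) * \<sigma>1 i (int l - 1)))
    in S1 ^ 2 - 2 * G * S2 =
         (\<Sum>k=1..n. \<Sum>l=1..n. Qc k l * H ^ (2 * n - k - l) * Py ^ (2 * (k + l + 1)))
         + nu ^ 2 * (\<Sum>k=0..n. \<Sum>l=0..n. (-1) ^ (k + l) * \<sigma> (int k) * \<sigma> (int l)
                        * H ^ (2 * n + 1 - k - l) * Py ^ (2 * (k + l)))"
proof -
  define x where "x = (\<lambda>t. nu / 2 * t + (\<Sum>i=1..n. xi i / sqrt (eps i * (t - as i))))"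
  define Delta where "Delta = (\<lambda>i. eps i * (a - as i))"
  define A where "A = (\<lambda>k. coeff (root_poly {1..n} as) k)"
  define \<sigma> where "\<sigma> = (\<lambda>m. sig {1..n} as m)"
  define \<sigma>1 where "\<sigma>1 = (\<lambda>i m. sig ({1..n} - {i}) as m)"
  define \<sigma>2 where "\<sigma>2 = (\<lambda>i j m. sig ({1..n} - {i, j}) as m)"
  define Pmom where "Pmom = a / deriv x a * Pa"
  define H where "H = Pmom ^ 2 + a * Py ^ 2"
  define bt where "bt = (\<lambda>k::nat. (-1) ^ k * (nu * \<sigma> (int k)
                + (\<Sum>i=1..n. xi i / sqrt (Delta i) * \<sigma>1 i (int k - 1))))"
  define ct where "ct = (\<lambda>k::nat. (-1) ^ (k + 1) / 2 * (nu ^ 2 * a * \<sigma> (int k)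
                + 2 * nu * (\<Sum>i=1..n. xi i / sqrt (Delta i) * (\<sigma>1 i (int k) + a * \<sigma>1 i (int k - 1)))
                + (\<Sum>i=1..n. xi i ^ 2 / Delta i * \<sigma>1 i (int k - 1))
                + (\<Sum>i=1..n. \<Sum>j\<in>{1..n} - {i}. xi i * xi j / sqrt (Delta i * Delta j)
                      * (\<sigma>2 i j (int k - 1) + a * \<sigma>2 i j (int k - 2)))))"
  define G where "G = (\<Sum>k=0..n. A (n - k) * H ^ (n - k) * Py ^ (2 * k + 1))"
  define Q1 where "Q1 = (\<Sum>k=0..n. bt k * H ^ (n - k) * Pmom * Py ^ (2 * k))"
  define Q2 where "Q2 = (\<Sum>k=0..n. ct k * H ^ (n - k) * Py ^ (2 * k + 1))"
  define S1 where "S1 = Q1 + y * G"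
  define S2 where "S2 = Q2 + y * Q1 + y ^ 2 / 2 * G"
  define Qc where "Qc = (\<lambda>k l::nat. (-1) ^ (k + l + 1)
                * (\<Sum>i=1..n. eps i * xi i ^ 2 * \<sigma>1 i (int k - 1) * \<sigma>1 i (int l - 1)))"
  have main: "S1 ^ 2 - 2 * G * S2 =
         (\<Sum>k=1..n. \<Sum>l=1..n. Qc k l * H ^ (2 * n - k - l) * Py ^ (2 * (k + l + 1)))
         + nu ^ 2 * (\<Sum>k=0..n. \<Sum>l=0..n. (-1) ^ (k + l) * \<sigma> (int k) * \<sigma> (int l)
                        * H ^ (2 * n + 1 - k - l) * Py ^ (2 * (k + l)))"
  proof -
    define u where "u = H"
    define v where "v = Py ^ 2"
    define P where "P = Pmom"
    define F where "F = (\<Prod>l\<in>{1..n}. u - as l * v)"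
    define Fi where "Fi = (\<lambda>i. \<Prod>l\<in>{1..n} - {i}. u - as l * v)"
    define Fij where "Fij = (\<lambda>i j. \<Prod>l\<in>{1..n} - {i, j}. u - as l * v)"
    define c where "c = (\<lambda>i. xi i / sqrt (Delta i))"
    define T where "T = (\<Sum>i=1..n. c i * Fi i)"
    define W where "W = (\<Sum>i=1..n. \<Sum>j\<in>{1..n} - {i}. c i * c j * Fij i j)"
    define C where "C = (\<Sum>i=1..n. c i ^ 2 * Fi i)"
    define g0 where "g0 = (\<lambda>k::nat. (-1)^k * \<sigma> (int k) * u^(n-k) * v^k)"
    define g1 where "g1 = (\<lambda>i k::nat. (-1)^k * \<sigma>1 i (int k - 1) * u^(n-k) * v^k)"
    define h1 where "h1 = (\<lambda>i k::nat. (-1)^k * \<sigma>1 i (int k) * u^(n-k) * v^k)"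
    define g2 where "g2 = (\<lambda>i j k::nat. (-1)^k * \<sigma>2 i j (int k - 1) * u^(n-k) * v^k)"
    define h2 where "h2 = (\<lambda>i j k::nat. (-1)^k * \<sigma>2 i j (int k - 2) * u^(n-k) * v^k)"
    have cardN: "card {1..n} = n" by simp
    have cardi: "card ({1..n} - {i}) = n - 1" if "i \<in> {1..n}" for i
      using that by simp
    have cardij: "card ({1..n} - {i, j}) = n - 2" if "i \<in> {1..n}" "j \<in> {1..n}" "i \<noteq> j" for i j
      using that by (simp add: card_Diff_subset)
    have sg0: "(\<Sum>k=0..n. g0 k) = F"
      unfolding g0_def \<sigma>_def F_def using sig_sum_d0[of "{1..n}" n as u v] by simp
    have sg1: "(\<Sum>k=0..n. g1 i k) = - (v * Fi i)" if "i \<in> {1..n}" for i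
      unfolding g1_def \<sigma>1_def Fi_def using sig_sum_d1[of "{1..n} - {i}" n as u v] that n_pos cardi[OF that] by simp
    have sh1: "(\<Sum>k=0..n. h1 i k) = u * Fi i" if "i \<in> {1..n}" for i
      unfolding h1_def \<sigma>1_def Fi_def using sig_sum_d0[of "{1..n} - {i}" n as u v] that n_pos cardi[OF that] by simp
    have sg2: "(\<Sum>k=0..n. g2 i j k) = - (u * v * Fij i j)" if "i \<in> {1..n}" "j \<in> {1..n}" "i \<noteq> j" for i j
    proof -
      have "n \<ge> 2" using that by auto
      then show ?thesis
        unfolding g2_def \<sigma>2_def Fij_def using sig_sum_d1[of "{1..n} - {i, j}" n as u v] cardij[OF that]
        by (simp add: numeral_2_eq_2 Suc_diff_Suc)
    qed
    have sh2: "(\<Sum>k=0..n. h2 i j k) = v^2 * Fij i j" if "i \<in> {1..n}" "j \<in> {1..n}" "i \<noteq> j" for i j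
    proof -
      have "n \<ge> 2" using that by auto
      then show ?thesis
        unfolding h2_def \<sigma>2_def Fij_def using sig_sum_d2[of "{1..n} - {i, j}" n as u v] cardij[OF that]
        by simp
    qed
    have Gk: "A (n - k) * H ^ (n - k) * Py ^ (2 * k + 1) = Py * g0 k" if "k \<in> {0..n}" for k
    proof -
      have "\<sigma> (int k) = (-1)^k * A (n - k)"
        using that unfolding \<sigma>_def A_def sig_def by simp
      moreover have "Py ^ (2 * k + 1) = Py * (Py^2)^k"
        by (simp add: power_mult)
      ultimately show ?thesis using that unfolding g0_def u_def v_def
        by simp
    qed
    have Geq: "G = Py * F"
    proof -
      have "G = (\<Sum>k=0..n. Py * g0 k)" unfolding G_def by (rule sum.cong) (simp_all only: Gk)
      then show ?thesis using sg0 by (simp add: sum_distrib_left[symmetric])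
    qed
    have pk: "Py ^ (2 * k) = v ^ k" "Py ^ (2 * k + 1) = Py * v ^ k" for k
      unfolding v_def by (simp_all add: power_mult)
    have Q1k: "bt k * H ^ (n - k) * Pmom * Py ^ (2 * k) = P * (nu * g0 k + (\<Sum>i=1..n. c i * g1 i k))" for k
      unfolding bt_def g0_def g1_def c_def P_def u_def pk
      by (simp add: power_mult sum_distrib_left sum_distrib_right algebra_simps)
    have Q1eq: "Q1 = P * (nu * F - v * T)"
    proof -
      have "Q1 = P * (nu * (\<Sum>k=0..n. g0 k) + (\<Sum>k=0..n. \<Sum>i=1..n. c i * g1 i k))"
        unfolding Q1_def Q1k by (simp add: sum_distrib_left[symmetric] sum.distrib)
      also have "(\<Sum>k=0..n. \<Sum>i=1..n. c i * g1 i k) = (\<Sum>i=1..n. c i * (\<Sum>k=0..n. g1 i k))"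
        by (subst sum.swap) (simp add: sum_distrib_left[symmetric])
      also have "\<dots> = (\<Sum>i=1..n. c i * (- (v * Fi i)))"
        by (rule sum.cong) (simp_all add: sg1)
      finally show ?thesis using sg0 unfolding T_def
        by (simp add: sum_distrib_left sum_negf algebra_simps)
    qed
    have Dpos: "Delta i > 0" if "i \<in> {1..n}" for i
      using Delta_pos that unfolding Delta_def by auto
    have c2: "xi i ^ 2 / Delta i = c i ^ 2" if "i \<in> {1..n}" for i
      using Dpos[OF that] unfolding c_def by (simp add: power_divide)
    have cc: "xi i * xi j / sqrt (Delta i * Delta j) = c i * c j" if "i \<in> {1..n}" "j \<in> {1..n}" for i j
      using Dpos[OF that(1)] Dpos[OF that(2)] unfolding c_def by (simp add: real_sqrt_mult)
    have ct_alt: "ct k = (-1) ^ (k + 1) / 2 * (nu ^ 2 * a * \<sigma> (int k)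
                + 2 * nu * (\<Sum>i=1..n. c i * (\<sigma>1 i (int k) + a * \<sigma>1 i (int k - 1)))
                + (\<Sum>i=1..n. c i ^ 2 * \<sigma>1 i (int k - 1))
                + (\<Sum>i=1..n. \<Sum>j\<in>{1..n} - {i}. c i * c j
                      * (\<sigma>2 i j (int k - 1) + a * \<sigma>2 i j (int k - 2))))" for k
    proof -
      have e1: "(\<Sum>i=1..n. xi i ^ 2 / Delta i * \<sigma>1 i (int k - 1)) = (\<Sum>i=1..n. c i ^ 2 * \<sigma>1 i (int k - 1))"
        by (rule sum.cong) (simp_all add: c2)
      have e2: "(\<Sum>i=1..n. \<Sum>j\<in>{1..n} - {i}. xi i * xi j / sqrt (Delta i * Delta j)
                      * (\<sigma>2 i j (int k - 1) + a * \<sigma>2 i j (int k - 2)))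
              = (\<Sum>i=1..n. \<Sum>j\<in>{1..n} - {i}. c i * c j
                      * (\<sigma>2 i j (int k - 1) + a * \<sigma>2 i j (int k - 2)))"
        by (intro sum.cong refl) (simp add: cc)
      show ?thesis unfolding ct_def e1 e2 c_def ..
    qed
    have Q2k: "ct k * H ^ (n - k) * Py ^ (2 * k + 1) = Py * ( -(nu^2*a/2) * g0 k
        - nu * (\<Sum>i=1..n. c i * (h1 i k + a * g1 i k)) - 1/2 * (\<Sum>i=1..n. c i^2 * g1 i k)
        - 1/2 * (\<Sum>i=1..n. \<Sum>j\<in>{1..n} - {i}. c i * c j * (g2 i j k + a * h2 i j k)))" for k
    proof -
      define mm where "mm = (-1)^k * u^(n-k) * v^k"
      have s1: "(\<Sum>i=1..n. c i * (h1 i k + a * g1 i k)) = mm * (\<Sum>i=1..n. c i * (\<sigma>1 i (int k) + a * \<sigma>1 i (int k - 1)))"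
        unfolding sum_distrib_left by (rule sum.cong) (simp_all add: mm_def h1_def g1_def algebra_simps)
      have s2: "(\<Sum>i=1..n. c i^2 * g1 i k) = mm * (\<Sum>i=1..n. c i ^ 2 * \<sigma>1 i (int k - 1))"
        unfolding sum_distrib_left by (rule sum.cong) (simp_all add: mm_def g1_def algebra_simps)
      have s3: "(\<Sum>i=1..n. \<Sum>j\<in>{1..n} - {i}. c i * c j * (g2 i j k + a * h2 i j k))
          = mm * (\<Sum>i=1..n. \<Sum>j\<in>{1..n} - {i}. c i * c j * (\<sigma>2 i j (int k - 1) + a * \<sigma>2 i j (int k - 2)))"
        unfolding sum_distrib_left by (intro sum.cong refl) (simp_all add: mm_def g2_def h2_def algebra_simps)
      have g0k: "g0 k = mm * \<sigma> (int k)" unfolding g0_def mm_def by simp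
      show ?thesis unfolding s1 s2 s3 g0k unfolding ct_alt pk mm_def u_def
        by (simp add: algebra_simps)
    qed
    have X1: "(\<Sum>k=0..n. \<Sum>i=1..n. c i * (h1 i k + a * g1 i k)) = (u - a * v) * T"
    proof -
      have "(\<Sum>k=0..n. \<Sum>i=1..n. c i * (h1 i k + a * g1 i k)) = (\<Sum>i=1..n. c i * ((\<Sum>k=0..n. h1 i k) + a * (\<Sum>k=0..n. g1 i k)))"
        by (subst sum.swap) (simp add: sum_distrib_left[symmetric] sum.distrib)
      also have "\<dots> = (\<Sum>i=1..n. (u - a * v) * (c i * Fi i))"
        by (rule sum.cong) (simp_all add: sg1 sh1 algebra_simps)
      finally show ?thesis unfolding T_def by (simp add: sum_distrib_left)
    qed
    have X2: "(\<Sum>k=0..n. \<Sum>i=1..n. c i^2 * g1 i k) = - (v * C)"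
    proof -
      have "(\<Sum>k=0..n. \<Sum>i=1..n. c i^2 * g1 i k) = (\<Sum>i=1..n. c i^2 * (\<Sum>k=0..n. g1 i k))"
        by (subst sum.swap) (simp add: sum_distrib_left[symmetric])
      also have "\<dots> = (\<Sum>i=1..n. - v * (c i^2 * Fi i))"
        by (rule sum.cong) (simp_all add: sg1 algebra_simps)
      finally show ?thesis unfolding C_def by (simp add: sum_distrib_left sum_negf)
    qed
    have X3: "(\<Sum>k=0..n. \<Sum>i=1..n. \<Sum>j\<in>{1..n} - {i}. c i * c j * (g2 i j k + a * h2 i j k)) = - (v * (u - a * v) * W)"
    proof -
      have "(\<Sum>k=0..n. \<Sum>i=1..n. \<Sum>j\<in>{1..n} - {i}. c i * c j * (g2 i j k + a * h2 i j k))
          = (\<Sum>i=1..n. \<Sum>k=0..n. \<Sum>j\<in>{1..n} - {i}. c i * c j * (g2 i j k + a * h2 i j k))"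
        by (rule sum.swap)
      also have "\<dots> = (\<Sum>i=1..n. \<Sum>j\<in>{1..n} - {i}. c i * c j * ((\<Sum>k=0..n. g2 i j k) + a * (\<Sum>k=0..n. h2 i j k)))"
        by (rule sum.cong, simp, subst sum.swap) (simp add: sum_distrib_left[symmetric] sum.distrib)
      also have "\<dots> = (\<Sum>i=1..n. \<Sum>j\<in>{1..n} - {i}. - (v * (u - a * v)) * (c i * c j * Fij i j))"
        by (intro sum.cong refl) (simp add: sg2 sh2 power2_eq_square algebra_simps)
      finally show ?thesis unfolding W_def by (simp add: sum_distrib_left sum_negf)
    qed
    have Q2eq: "Q2 = Py * ( -(nu^2*a/2) * F - nu * (u - a * v) * T + v / 2 * C + v * (u - a * v) / 2 * W)"
    proof -
      define X where "X = (\<lambda>k. \<Sum>i=1..n. c i * (h1 i k + a * g1 i k))"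
      define Y where "Y = (\<lambda>k. \<Sum>i=1..n. c i^2 * g1 i k)"
      define Z where "Z = (\<lambda>k. \<Sum>i=1..n. \<Sum>j\<in>{1..n} - {i}. c i * c j * (g2 i j k + a * h2 i j k))"
      have "Q2 = (\<Sum>k=0..n. Py * ( (-(nu^2*a/2)) * g0 k + (- nu) * X k + (-1/2) * Y k + (-1/2) * Z k))"
        unfolding Q2_def Q2k X_def Y_def Z_def by (simp add: algebra_simps)
      also have "\<dots> = Py * ( (-(nu^2*a/2)) * (\<Sum>k=0..n. g0 k) + (- nu) * (\<Sum>k=0..n. X k)
           + (-1/2) * (\<Sum>k=0..n. Y k) + (-1/2) * (\<Sum>k=0..n. Z k))"
        by (simp only: sum_distrib_left[symmetric] sum.distrib)
      finally have "Q2 = Py * ( -(nu^2*a/2) * (\<Sum>k=0..n. g0 k)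
        - nu * (\<Sum>k=0..n. \<Sum>i=1..n. c i * (h1 i k + a * g1 i k)) - 1/2 * (\<Sum>k=0..n. \<Sum>i=1..n. c i^2 * g1 i k)
        - 1/2 * (\<Sum>k=0..n. \<Sum>i=1..n. \<Sum>j\<in>{1..n} - {i}. c i * c j * (g2 i j k + a * h2 i j k)))"
        unfolding X_def Y_def Z_def by simp
      then show ?thesis unfolding X1 X2 X3 sg0 by (simp add: field_simps)
    qed
    define D where "D = (\<Sum>i=1..n. c i ^ 2 * Fi i ^ 2)"
    define E where "E = (\<Sum>i=1..n. eps i * xi i ^ 2 * Fi i ^ 2)"
    have Fsplit: "F = (u - as i * v) * Fi i" if "i \<in> {1..n}" for i
      unfolding F_def Fi_def using that by (simp add: prod.remove)
    have Fisplit: "Fi i = (u - as j * v) * Fij i j" if "i \<in> {1..n}" "j \<in> {1..n}" "i \<noteq> j" for i j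
    proof -
      have "{1..n} - {i, j} = ({1..n} - {i}) - {j}" by auto
      moreover have "j \<in> {1..n} - {i}" using that by auto
      ultimately show ?thesis unfolding Fi_def Fij_def
        using prod.remove[of "{1..n} - {i}" j "\<lambda>l. u - as l * v"] by simp
    qed
    have Fijsym: "Fij i j = Fij j i" for i j unfolding Fij_def by (simp add: insert_commute)
    have FiFj: "Fi i * Fi j = F * Fij i j" if "i \<in> {1..n}" "j \<in> {1..n}" "i \<noteq> j" for i j
    proof -
      have e2: "Fi j = (u - as i * v) * Fij i j" using Fisplit[of j i] that Fijsym[of j i] by simp
      have "Fi i * Fi j = ((u - as i * v) * Fi i) * Fij i j" unfolding e2 by (simp add: algebra_simps)
      then show ?thesis using Fsplit[OF that(1)] by simp
    qed
    have cE: "c i ^ 2 * (a - as i) = eps i * xi i ^ 2" if "i \<in> {1..n}" for i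
    proof -
      have "c i ^ 2 = xi i ^ 2 / Delta i" using c2[OF that] by simp
      moreover have "a - as i \<noteq> 0" using Dpos[OF that] unfolding Delta_def by auto
      moreover have "eps i = 1 \<or> eps i = -1" using signs that by auto
      ultimately show ?thesis unfolding Delta_def by (auto simp: field_simps)
    qed
    have K1: "T ^ 2 = D + F * W"
    proof -
      have "T ^ 2 = (\<Sum>i=1..n. \<Sum>j=1..n. c i * Fi i * (c j * Fi j))"
        unfolding T_def power2_eq_square by (rule sum_product)
      also have "\<dots> = (\<Sum>i=1..n. c i ^ 2 * Fi i ^ 2 + (\<Sum>j\<in>{1..n} - {i}. F * (c i * c j * Fij i j)))"
      proof (rule sum.cong)
        fix i assume i: "i \<in> {1..n}"
        have "(\<Sum>j=1..n. c i * Fi i * (c j * Fi j)) = c i * Fi i * (c i * Fi i) + (\<Sum>j\<in>{1..n} - {i}. c i * Fi i * (c j * Fi j))"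
          using i by (simp add: sum.remove)
        also have "(\<Sum>j\<in>{1..n} - {i}. c i * Fi i * (c j * Fi j)) = (\<Sum>j\<in>{1..n} - {i}. F * (c i * c j * Fij i j))"
        proof (rule sum.cong)
          fix j assume "j \<in> {1..n} - {i}"
          then have "Fi i * Fi j = F * Fij i j" using FiFj i by auto
          then show "c i * Fi i * (c j * Fi j) = F * (c i * c j * Fij i j)"
            by (metis (no_types, lifting) mult.assoc mult.left_commute)
        qed simp
        finally show "(\<Sum>j=1..n. c i * Fi i * (c j * Fi j)) = c i ^ 2 * Fi i ^ 2 + (\<Sum>j\<in>{1..n} - {i}. F * (c i * c j * Fij i j))"
          by (simp add: power2_eq_square algebra_simps)
      qed simp
      finally show ?thesis unfolding D_def W_def by (simp add: sum.distrib sum_distrib_left)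
    qed
    have K2: "(u - a * v) * D - F * C = - (v * E)"
    proof -
      have "(u - a * v) * D - F * C = (\<Sum>i=1..n. (u - a * v) * (c i ^ 2 * Fi i ^ 2) - F * (c i ^ 2 * Fi i))"
        unfolding D_def C_def by (simp add: sum_distrib_left sum_subtractf)
      also have "\<dots> = (\<Sum>i=1..n. - v * (eps i * xi i ^ 2 * Fi i ^ 2))"
      proof (rule sum.cong)
        fix i assume i: "i \<in> {1..n}"
        have "(u - a * v) * (c i ^ 2 * Fi i ^ 2) - F * (c i ^ 2 * Fi i) = - v * ((c i ^ 2 * (a - as i)) * Fi i ^ 2)"
          unfolding Fsplit[OF i] by (simp add: power2_eq_square algebra_simps)
        then show "(u - a * v) * (c i ^ 2 * Fi i ^ 2) - F * (c i ^ 2 * Fi i) = - v * (eps i * xi i ^ 2 * Fi i ^ 2)"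
          using cE[OF i] by simp
      qed simp
      finally show ?thesis unfolding E_def by (simp add: sum_distrib_left sum_negf)
    qed
    have R2: "(\<Sum>k=0..n. \<Sum>l=0..n. (-1) ^ (k + l) * \<sigma> (int k) * \<sigma> (int l)
                        * H ^ (2 * n + 1 - k - l) * Py ^ (2 * (k + l))) = u * F ^ 2"
    proof -
      have "(\<Sum>k=0..n. \<Sum>l=0..n. (-1) ^ (k + l) * \<sigma> (int k) * \<sigma> (int l)
                        * H ^ (2 * n + 1 - k - l) * Py ^ (2 * (k + l))) = (\<Sum>k=0..n. \<Sum>l=0..n. u * (g0 k * g0 l))"
      proof (intro sum.cong refl)
        fix k l assume "k \<in> {0..n}" "l \<in> {0..n}"
        then have ee: "2 * n + 1 - k - l = 1 + (n - k) + (n - l)" by auto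
        have hp: "H ^ (2 * n + 1 - k - l) = H * H ^ (n - k) * H ^ (n - l)" by (subst ee) (simp add: power_add)
        have pp: "Py ^ (2 * (k + l)) = v ^ k * v ^ l" unfolding v_def by (simp add: power_mult power_add)
        show "(-1) ^ (k + l) * \<sigma> (int k) * \<sigma> (int l) * H ^ (2 * n + 1 - k - l) * Py ^ (2 * (k + l))
            = u * (g0 k * g0 l)"
          unfolding g0_def u_def hp pp by (simp add: power_add algebra_simps)
      qed
      also have "\<dots> = u * ((\<Sum>k=0..n. g0 k) * (\<Sum>l=0..n. g0 l))"
        by (subst sum_product) (simp only: sum_distrib_left)
      finally show ?thesis using sg0 by (simp add: power2_eq_square)
    qed
    define q where "q = (\<lambda>k l. - v * (\<Sum>i=1..n. eps i * xi i ^ 2 * (g1 i k * g1 i l)))"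
    have g1z: "g1 i 0 = 0" for i unfolding g1_def \<sigma>1_def sig_def by simp
    have R1a: "(\<Sum>k=1..n. \<Sum>l=1..n. Qc k l * H ^ (2 * n - k - l) * Py ^ (2 * (k + l + 1)))
        = (\<Sum>k=1..n. \<Sum>l=1..n. q k l)"
    proof (intro sum.cong refl)
      fix k l assume "k \<in> {1..n}" "l \<in> {1..n}"
      then have ee: "2 * n - k - l = (n - k) + (n - l)" by auto
      have e: "H ^ (2 * n - k - l) = H ^ (n - k) * H ^ (n - l)" by (subst ee) (simp add: power_add)
      have p: "Py ^ (2 * (k + l + 1)) = v * v ^ k * v ^ l" unfolding v_def by (simp add: power_mult power_add power2_eq_square)
      have "q k l = - v * ((-1)^k * (-1)^l * u^(n-k) * u^(n-l) * v^k * v^l)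
          * (\<Sum>i=1..n. eps i * xi i ^ 2 * \<sigma>1 i (int k - 1) * \<sigma>1 i (int l - 1))"
        unfolding q_def g1_def sum_distrib_left by (simp add: algebra_simps)
      then show "Qc k l * H ^ (2 * n - k - l) * Py ^ (2 * (k + l + 1)) = q k l"
        unfolding Qc_def e p u_def by (simp add: power_add algebra_simps)
    qed
    have q0: "q 0 l = 0" "q k 0 = 0" for k l unfolding q_def g1z by simp_all
    have R1b: "(\<Sum>k=1..n. \<Sum>l=1..n. q k l) = (\<Sum>k=0..n. \<Sum>l=0..n. q k l)"
    proof -
      have "(\<Sum>k=1..n. \<Sum>l=1..n. q k l) = (\<Sum>k=1..n. \<Sum>l=0..n. q k l)"
        by (rule sum.cong[OF refl], rule sum.mono_neutral_left) (auto simp: q0 Suc_le_eq)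
      also have "\<dots> = (\<Sum>k=0..n. \<Sum>l=0..n. q k l)"
        by (rule sum.mono_neutral_left) (auto simp: q0 Suc_le_eq)
      finally show ?thesis .
    qed
    have R1c: "(\<Sum>k=0..n. \<Sum>l=0..n. q k l) = - (v ^ 3 * E)"
    proof -
      have "(\<Sum>k=0..n. \<Sum>l=0..n. q k l) = - v * (\<Sum>k=0..n. \<Sum>l=0..n. \<Sum>i=1..n. eps i * xi i ^ 2 * (g1 i k * g1 i l))"
        unfolding q_def by (simp add: sum_distrib_left)
      also have "(\<Sum>k=0..n. \<Sum>l=0..n. \<Sum>i=1..n. eps i * xi i ^ 2 * (g1 i k * g1 i l))
          = (\<Sum>k=0..n. \<Sum>i=1..n. \<Sum>l=0..n. eps i * xi i ^ 2 * (g1 i k * g1 i l))"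
        by (rule sum.cong, simp, rule sum.swap)
      also have "\<dots> = (\<Sum>i=1..n. \<Sum>k=0..n. \<Sum>l=0..n. eps i * xi i ^ 2 * (g1 i k * g1 i l))"
        by (rule sum.swap)
      also have "\<dots> = (\<Sum>i=1..n. eps i * xi i ^ 2 * ((\<Sum>k=0..n. g1 i k) * (\<Sum>l=0..n. g1 i l)))"
        by (subst sum_product) (simp only: sum_distrib_left)
      also have "\<dots> = (\<Sum>i=1..n. v ^ 2 * (eps i * xi i ^ 2 * Fi i ^ 2))"
        by (rule sum.cong) (simp_all add: sg1 power2_eq_square algebra_simps)
      finally show ?thesis unfolding E_def by (simp add: sum_distrib_left[symmetric] power3_eq_cube power2_eq_square algebra_simps)
    qed
    have L: "S1 ^ 2 - 2 * G * S2 = Q1 ^ 2 - 2 * G * Q2"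
      unfolding S1_def S2_def by (simp add: algebra_simps power2_eq_square)
    have P2: "P ^ 2 = u - a * v" unfolding P_def u_def H_def v_def by simp
    have Py2: "Py ^ 2 = v" unfolding v_def ..
    define Y where "Y = -(nu^2*a/2) * F - nu * (u - a * v) * T + v / 2 * C + v * (u - a * v) / 2 * W"
    have "Q1 ^ 2 - 2 * G * Q2 = P ^ 2 * (nu * F - v * T) ^ 2 - 2 * Py ^ 2 * F * Y"
      unfolding Q1eq Geq Q2eq Y_def by algebra
    also have "\<dots> = (u - a * v) * (nu * F - v * T) ^ 2 - 2 * v * F * Y"
      unfolding P2 Py2 ..
    also have "\<dots> = nu^2 * u * F^2 + v ^ 2 * ((u - a * v) * (T ^ 2 - F * W) - F * C)"
      unfolding Y_def by (simp add: field_simps power2_eq_square)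
    also have "\<dots> = nu^2 * u * F^2 - v^3 * E"
    proof -
      have "T ^ 2 - F * W = D" using K1 by simp
      moreover have "v ^ 2 * ((u - a * v) * D - F * C) = - (v ^ 3 * E)"
        unfolding K2 by (simp add: power3_eq_cube power2_eq_square)
      ultimately show ?thesis by simp
    qed
    finally have LHS: "S1 ^ 2 - 2 * G * S2 = nu^2 * u * F^2 - v^3 * E" using L by simp
    show ?thesis unfolding LHS R1a R1b R1c R2 by (simp add: algebra_simps)
  qed
  show ?thesis
    using main unfolding Let_def x_def Delta_def A_def \<sigma>_def \<sigma>1_def \<sigma>2_def Pmom_def H_def bt_def ct_def
      G_def Q1_def Q2_def S1_def S2_def Qc_def .
qed

end
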